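(* Let $\mathcal{C}\subseteq(\mathbb{C}^a)^{\otimes n}$ be a quantum locally recoverable code of block length $n$, dimension $k>0$, distance $d$, and locality $r$. Then \[ k \leq n-2(d-1)-\left\lfloor\frac{n-(d-1)}{r}\right\rfloor-\left\lfloor\frac{n-2(d-1)-\left\lfloor\frac{n-(d-1)}{r}\right\rfloor}{r}\right\rfloor . \]
   Context: $[n]=\{0,\dots,n-1\}$. A quantum code of block length $n$, local dimension $a$ and dimension $k$ is an $a^k$-dimensional linear subspace $\mathcal{C}\subseteq(\mathbb{C}^a)^{\otimes n}$; a code state is (the density matrix of) a unit vector in $\mathcal{C}$. For a state $\rho$ on qudits $A$ and $B\subseteq A$, $\rho_B$ denotes the reduced density matrix on $B$; $\mathcal{M}(A)$ denotes density matrices on qudits $A$. The code can decode from erasures in $S\subseteq[n]$ if there is a quantum channel $\mathrm{Dec}^S:\mathcal{M}([n]\setminus S)\to\mathcal{M}([n])$ with $\mathrm{Dec}^S(\psi_{[n]\setminus S})=\psi$ for every code state $\psi$. The distance $d$ is the maximum $d$ such that the code can decode from erasures in every $S$ with $|S|<d$. The code is a quantum locally recoverable code (qLRC) of locality $r$ if for every $i\in[n]$ there is a set $I_i\subseteq[n]$ with $i\in I_i$, $|I_i|\le r$, and a quantum channel $\mathrm{Rec}_i:\mathcal{M}(I_i\setminus\{i\})\to\mathcal{M}(I_i)$ such that $(\mathrm{Rec}_i\otimes \mathrm{id}_{[n]\setminus I_i})(\psi_{[n]\setminus\{i\}})=\psi$ for every code state $\psi$. *)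

theory Defs
  imports "HOL-Analysis.Analysis" "HOL-Library.Function_Algebras"
begin

text \<open>Qudits are indexed by natural numbers; the block is [n] = {..<n}.
  A computational-basis configuration of the qudits in a set A is a function
  x :: nat => nat with x i < a for i in A and x i = 0 for i outside A.
  Vectors of (C^a)^{tensor A} are functions cfg => complex, operators
  (matrices) on the qudits A are functions cfg => cfg => complex.\<close>

type_synonym cfg = "nat \<Rightarrow> nat"
type_synonym qvec = "cfg \<Rightarrow> complex"
type_synonym qop = "cfg \<Rightarrow> cfg \<Rightarrow> complex"

definition cfgs :: "nat \<Rightarrow> nat set \<Rightarrow> cfg set" where
  "cfgs a A = {x. (\<forall>i. i \<notin> A \<longrightarrow> x i = 0) \<and> (\<forall>i\<in>A. x i < a)}"

definition restr :: "nat set \<Rightarrow> cfg \<Rightarrow> cfg" where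
  "restr B x = (\<lambda>i. if i \<in> B then x i else 0)"

definition merge :: "nat set \<Rightarrow> cfg \<Rightarrow> cfg \<Rightarrow> cfg" where
  "merge A x z = (\<lambda>i. if i \<in> A then x i else z i)"

definition vscale :: "complex \<Rightarrow> qvec \<Rightarrow> qvec" where
  "vscale c v = (\<lambda>x. c * v x)"

definition qvecs :: "nat \<Rightarrow> nat \<Rightarrow> qvec set" where
  "qvecs a n = {v. \<forall>x. x \<notin> cfgs a {..<n} \<longrightarrow> v x = 0}"

definition quantum_code :: "nat \<Rightarrow> nat \<Rightarrow> nat \<Rightarrow> qvec set \<Rightarrow> bool" where
  "quantum_code a n k C \<longleftrightarrow> C \<subseteq> qvecs a n \<and> module.subspace vscale C
     \<and> vector_space.dim vscale C = a ^ k"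

definition code_state :: "nat \<Rightarrow> nat \<Rightarrow> qvec set \<Rightarrow> qvec \<Rightarrow> bool" where
  "code_state a n C \<psi> \<longleftrightarrow> \<psi> \<in> C \<and> (\<Sum>x\<in>cfgs a {..<n}. (cmod (\<psi> x))\<^sup>2) = 1"

text \<open>Reduced density matrix on B of the pure state psi on [n]
  (partial trace of |psi><psi| over [n] - B).\<close>
definition reduced :: "nat \<Rightarrow> nat \<Rightarrow> nat set \<Rightarrow> qvec \<Rightarrow> qop" where
  "reduced a n B \<psi> = (\<lambda>x y. if x \<in> cfgs a B \<and> y \<in> cfgs a B then
      (\<Sum>z\<in>cfgs a ({..<n} - B). \<psi> (merge B x z) * cnj (\<psi> (merge B y z))) else 0)"

text \<open>Quantum channel M(A) -> M(B), given by a (finite) Kraus representation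
  Ks: each Kraus operator K maps basis configurations of A to those of B,
  and sum_K K^dagger K = identity on A (trace preservation).\<close>
definition kraus :: "nat \<Rightarrow> nat set \<Rightarrow> nat set \<Rightarrow> qop list \<Rightarrow> bool" where
  "kraus a A B Ks \<longleftrightarrow>
     (\<forall>K\<in>set Ks. \<forall>y x. K y x \<noteq> 0 \<longrightarrow> y \<in> cfgs a B \<and> x \<in> cfgs a A) \<and>
     (\<forall>x\<in>cfgs a A. \<forall>x'\<in>cfgs a A.
        (\<Sum>K\<leftarrow>Ks. \<Sum>y\<in>cfgs a B. cnj (K y x) * K y x') = (if x = x' then 1 else 0))"

text \<open>Apply (Phi tensor id_E) to a matrix rho on the qudits A \<union> E
  (A, E disjoint), where Phi has Kraus operators Ks from A to B;
  the result is a matrix on B \<union> E.\<close>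
definition apply_ch :: "nat \<Rightarrow> nat set \<Rightarrow> nat set \<Rightarrow> nat set \<Rightarrow> qop list \<Rightarrow> qop \<Rightarrow> qop" where
  "apply_ch a A B E Ks \<rho> = (\<lambda>y y'. if y \<in> cfgs a (B \<union> E) \<and> y' \<in> cfgs a (B \<union> E) then
      (\<Sum>K\<leftarrow>Ks. \<Sum>x\<in>cfgs a A. \<Sum>x'\<in>cfgs a A.
         K (restr B y) x * \<rho> (merge A x (restr E y)) (merge A x' (restr E y'))
           * cnj (K (restr B y') x')) else 0)"

definition decodable :: "nat \<Rightarrow> nat \<Rightarrow> qvec set \<Rightarrow> nat set \<Rightarrow> bool" where
  "decodable a n C S \<longleftrightarrow> (\<exists>Ks. kraus a ({..<n} - S) {..<n} Ks \<and>
     (\<forall>\<psi>. code_state a n C \<psi> \<longrightarrow>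
        apply_ch a ({..<n} - S) {..<n} {} Ks (reduced a n ({..<n} - S) \<psi>)
          = reduced a n {..<n} \<psi>))"

text \<open>d is the distance: the maximum d such that decoding is possible from
  every erasure set S \<subseteq> [n] with |S| < d (the property is downward closed
  in d, so "maximum" means: it holds for d and fails for d+1).\<close>
definition decodes_below :: "nat \<Rightarrow> nat \<Rightarrow> qvec set \<Rightarrow> nat \<Rightarrow> bool" where
  "decodes_below a n C d \<longleftrightarrow> (\<forall>S. S \<subseteq> {..<n} \<and> card S < d \<longrightarrow> decodable a n C S)"

definition code_distance :: "nat \<Rightarrow> nat \<Rightarrow> qvec set \<Rightarrow> nat \<Rightarrow> bool" where
  "code_distance a n C d \<longleftrightarrow> decodes_below a n C d \<and> \<not> decodes_below a n C (Suc d)"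

definition qLRC_locality :: "nat \<Rightarrow> nat \<Rightarrow> qvec set \<Rightarrow> nat \<Rightarrow> bool" where
  "qLRC_locality a n C r \<longleftrightarrow> (\<forall>i<n. \<exists>I Ks. i \<in> I \<and> I \<subseteq> {..<n} \<and> card I \<le> r \<and>
      kraus a (I - {i}) I Ks \<and>
      (\<forall>\<psi>. code_state a n C \<psi> \<longrightarrow>
         apply_ch a (I - {i}) I ({..<n} - I) Ks (reduced a n ({..<n} - {i}) \<psi>)
           = reduced a n {..<n} \<psi>))"

end

theory Submission
  imports Defs
begin

global_interpretation V: vector_space vscale
  by unfold_locales (auto simp: vscale_def fun_eq_iff algebra_simps)

lemma vscale_apply[simp]: "vscale c v x = c * v x"
  by (simp add: vscale_def)

lemma sum_fun_apply: "(sum F I) x = (\<Sum>i\<in>I. F i x)"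
  by (induction I rule: infinite_finite_induct) auto

lemma merge_in_cfgs:
  assumes "p \<in> cfgs a P" "q \<in> cfgs a Q"
  shows "merge P p q \<in> cfgs a (P \<union> Q)"
  using assms by (auto simp: cfgs_def merge_def)

lemma restr_in_cfgs:
  assumes "z \<in> cfgs a R" "P \<subseteq> R" shows "restr P z \<in> cfgs a P"
  using assms by (auto simp: cfgs_def restr_def)

lemma cfgs_split_bij:
  assumes "P \<inter> Q = {}"
  shows "bij_betw (\<lambda>(p,q). merge P p q) (cfgs a P \<times> cfgs a Q) (cfgs a (P \<union> Q))"
proof (rule bij_betwI[where g="\<lambda>z. (restr P z, restr Q z)"])
  show "(\<lambda>(p,q). merge P p q) \<in> cfgs a P \<times> cfgs a Q \<rightarrow> cfgs a (P \<union> Q)"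
    by (auto intro: merge_in_cfgs)
  show "(\<lambda>z. (restr P z, restr Q z)) \<in> cfgs a (P \<union> Q) \<rightarrow> cfgs a P \<times> cfgs a Q"
    by (auto intro!: restr_in_cfgs)
  show "(\<lambda>z. (restr P z, restr Q z)) ((\<lambda>(p,q). merge P p q) x) = x" if "x \<in> cfgs a P \<times> cfgs a Q" for x
    using that assms by (cases x) (auto simp: cfgs_def merge_def restr_def fun_eq_iff)
  show "(\<lambda>(p,q). merge P p q) (restr P y, restr Q y) = y" if "y \<in> cfgs a (P \<union> Q)" for y
    using that by (auto simp: cfgs_def merge_def restr_def fun_eq_iff)
qed

lemma cfgs_empty: "cfgs a {} = {\<lambda>_. 0}"
  by (auto simp: cfgs_def)

lemma cfgs_single: "cfgs a {i} = (\<lambda>v. \<lambda>j. if j = i then v else 0) ` {..<a}"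
  by (auto simp: cfgs_def fun_eq_iff image_def)

lemma finite_card_cfgs:
  assumes "finite A"
  shows "finite (cfgs a A) \<and> card (cfgs a A) = a ^ card A"
  using assms
proof (induction A rule: finite_induct)
  case empty
  then show ?case by (simp add: cfgs_empty)
next
  case (insert i A)
  have s: "finite (cfgs a {i}) \<and> card (cfgs a {i}) = a"
    unfolding cfgs_single
    by (subst card_image) (auto simp: inj_on_def fun_eq_iff)
  have b: "bij_betw (\<lambda>(p,q). merge {i} p q) (cfgs a {i} \<times> cfgs a A) (cfgs a ({i} \<union> A))"
    using insert by (intro cfgs_split_bij) auto
  then have "finite (cfgs a ({i} \<union> A))"
    using s insert bij_betw_finite by blast
  moreover have "card (cfgs a ({i} \<union> A)) = a * a ^ card A"
    using bij_betw_same_card[OF b] s insert by (simp add: card_cartesian_product)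
  ultimately show ?case using insert by simp
qed

lemma finite_cfgs[simp,intro]: "finite A \<Longrightarrow> finite (cfgs a A)"
  using finite_card_cfgs by blast

lemma sum_cfgs_split:
  assumes "P \<inter> Q = {}" "finite P" "finite Q"
  shows "(\<Sum>z\<in>cfgs a (P \<union> Q). f z) = (\<Sum>p\<in>cfgs a P. \<Sum>q\<in>cfgs a Q. f (merge P p q))"
proof -
  have "(\<Sum>z\<in>cfgs a (P \<union> Q). f z) = (\<Sum>x\<in>cfgs a P \<times> cfgs a Q. f ((\<lambda>(p,q). merge P p q) x))"
    using cfgs_split_bij[OF assms(1), of a] by (simp add: sum.reindex_bij_betw)
  also have "\<dots> = (\<Sum>p\<in>cfgs a P. \<Sum>q\<in>cfgs a Q. f (merge P p q))"
    by (simp add: sum.cartesian_product split_def)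
  finally show ?thesis .
qed


definition ip :: "nat \<Rightarrow> nat set \<Rightarrow> qvec \<Rightarrow> qvec \<Rightarrow> complex" where
  "ip a D f g = (\<Sum>z\<in>cfgs a D. f z * cnj (g z))"

definition sl :: "nat set \<Rightarrow> cfg \<Rightarrow> qvec \<Rightarrow> qvec" where
  "sl T t v = (\<lambda>z. v (merge T t z))"

definition app :: "nat \<Rightarrow> nat set \<Rightarrow> nat set \<Rightarrow> nat set \<Rightarrow> qop \<Rightarrow> qvec \<Rightarrow> qvec" where
  "app a A B E K u = (\<lambda>y. \<Sum>x\<in>cfgs a A. K (restr B y) x * u (merge A x (restr E y)))"

lemma sum_list_idx: "(\<Sum>K\<leftarrow>Ks. g K) = (\<Sum>j<length Ks. g (Ks ! j))"
  by (simp add: sum_list_sum_nth atLeast0LessThan)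

lemma sl_sl: "sl E' e (sl T t v) = sl (T \<union> E') (merge T t e) v"
  unfolding sl_def by (intro ext arg_cong[where f=v]) (auto simp: merge_def fun_eq_iff)

lemma ip_cong:
  assumes "\<And>z. z \<in> cfgs a D \<Longrightarrow> f z = f' z" "\<And>z. z \<in> cfgs a D \<Longrightarrow> g z = g' z"
  shows "ip a D f g = ip a D f' g'"
  using assms unfolding ip_def by (intro sum.cong) auto

lemma sum5_perm:
  "(\<Sum>j\<in>J. \<Sum>b\<in>B. \<Sum>f\<in>F. \<Sum>x'\<in>X. \<Sum>x\<in>X. g j b f x' x)
   = (\<Sum>f\<in>F. \<Sum>x\<in>X. \<Sum>x'\<in>X. \<Sum>j\<in>J. \<Sum>b\<in>B. (g j b f x' x :: 'z::comm_monoid_add))"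
proof -
  have "(\<Sum>j\<in>J. \<Sum>b\<in>B. \<Sum>f\<in>F. \<Sum>x'\<in>X. \<Sum>x\<in>X. g j b f x' x)
      = (\<Sum>j\<in>J. \<Sum>f\<in>F. \<Sum>b\<in>B. \<Sum>x'\<in>X. \<Sum>x\<in>X. g j b f x' x)"
    by (rule sum.cong[OF refl], rule sum.swap)
  also have "\<dots> = (\<Sum>f\<in>F. \<Sum>j\<in>J. \<Sum>b\<in>B. \<Sum>x'\<in>X. \<Sum>x\<in>X. g j b f x' x)"
    by (rule sum.swap)
  also have "\<dots> = (\<Sum>f\<in>F. \<Sum>j\<in>J. \<Sum>x'\<in>X. \<Sum>b\<in>B. \<Sum>x\<in>X. g j b f x' x)"
    by (rule sum.cong[OF refl], rule sum.cong[OF refl], rule sum.swap)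
  also have "\<dots> = (\<Sum>f\<in>F. \<Sum>x'\<in>X. \<Sum>j\<in>J. \<Sum>b\<in>B. \<Sum>x\<in>X. g j b f x' x)"
    by (rule sum.cong[OF refl], rule sum.swap)
  also have "\<dots> = (\<Sum>f\<in>F. \<Sum>x'\<in>X. \<Sum>j\<in>J. \<Sum>x\<in>X. \<Sum>b\<in>B. g j b f x' x)"
    by (rule sum.cong[OF refl], rule sum.cong[OF refl], rule sum.cong[OF refl], rule sum.swap)
  also have "\<dots> = (\<Sum>f\<in>F. \<Sum>x'\<in>X. \<Sum>x\<in>X. \<Sum>j\<in>J. \<Sum>b\<in>B. g j b f x' x)"
    by (rule sum.cong[OF refl], rule sum.cong[OF refl], rule sum.swap)
  also have "\<dots> = (\<Sum>f\<in>F. \<Sum>x\<in>X. \<Sum>x'\<in>X. \<Sum>j\<in>J. \<Sum>b\<in>B. g j b f x' x)"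
    by (rule sum.cong[OF refl], rule sum.swap)
  finally show ?thesis .
qed

lemma TP:
  assumes kr: "kraus a A B Ks"
    and fin: "finite A" "finite B" "finite E"
    and dis: "A \<inter> E = {}" "B \<inter> E = {}" and E'E: "E' \<subseteq> E"
    and e: "e \<in> cfgs a E'" "e' \<in> cfgs a E'"
  shows "(\<Sum>K\<leftarrow>Ks. ip a ((B \<union> E) - E') (sl E' e (app a A B E K u)) (sl E' e' (app a A B E K v)))
       = ip a ((A \<union> E) - E') (sl E' e u) (sl E' e' v)"
proof -
  let ?F = "E - E'"
  define U where "U x f = u (merge A x (merge E' e f))" for x f
  define W where "W x f = v (merge A x (merge E' e' f))" for x f
  have finF: "finite ?F" using fin by auto
  have r1: "restr B (merge E' ee (merge B b f)) = b" if "b \<in> cfgs a B" for b f ee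
    using that dis E'E by (auto simp: restr_def merge_def cfgs_def fun_eq_iff)
  have r2: "restr E (merge E' ee (merge B b f)) = merge E' ee f"
    if "ee \<in> cfgs a E'" "f \<in> cfgs a ?F" for b f ee
    using that dis E'E by (auto simp: restr_def merge_def cfgs_def fun_eq_iff)
  have L: "ip a ((B \<union> E) - E') (sl E' e (app a A B E K u)) (sl E' e' (app a A B E K v))
     = (\<Sum>b\<in>cfgs a B. \<Sum>f\<in>cfgs a ?F. \<Sum>x\<in>cfgs a A. \<Sum>x'\<in>cfgs a A.
          (cnj (K b x') * K b x) * (U x f * cnj (W x' f)))" for K
  proof -
    have eq: "(B \<union> E) - E' = B \<union> ?F" using dis E'E by auto
    have "ip a ((B \<union> E) - E') (sl E' e (app a A B E K u)) (sl E' e' (app a A B E K v))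
       = (\<Sum>b\<in>cfgs a B. \<Sum>f\<in>cfgs a ?F. (\<Sum>x\<in>cfgs a A. K b x * U x f) * cnj (\<Sum>x'\<in>cfgs a A. K b x' * W x' f))"
      unfolding ip_def eq
      apply (subst sum_cfgs_split)
      using dis fin apply auto[3]
      apply (intro sum.cong refl)
      apply (simp add: sl_def app_def r1 r2 e U_def W_def)
      done
    also have "\<dots> = (\<Sum>b\<in>cfgs a B. \<Sum>f\<in>cfgs a ?F. \<Sum>x\<in>cfgs a A. \<Sum>x'\<in>cfgs a A.
          (cnj (K b x') * K b x) * (U x f * cnj (W x' f)))"
      by (simp add: sum_product cnj_sum sum_distrib_left sum_distrib_right mult_ac) (rule sum.cong[OF refl], rule sum.cong[OF refl], rule sum.swap)
    finally show ?thesis .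
  qed
  have "(\<Sum>K\<leftarrow>Ks. ip a ((B \<union> E) - E') (sl E' e (app a A B E K u)) (sl E' e' (app a A B E K v)))
      = (\<Sum>f\<in>cfgs a ?F. \<Sum>x\<in>cfgs a A. \<Sum>x'\<in>cfgs a A.
          (\<Sum>K\<leftarrow>Ks. \<Sum>b\<in>cfgs a B. cnj (K b x') * K b x) * (U x f * cnj (W x' f)))"
    unfolding L sum_list_idx
    apply (simp add: sum_distrib_right)
    apply (subst sum5_perm)
    apply (rule sum.cong[OF refl], rule sum.swap)
    done
  also have "\<dots> = (\<Sum>f\<in>cfgs a ?F. \<Sum>x\<in>cfgs a A. \<Sum>x'\<in>cfgs a A.
          (if x' = x then 1 else 0) * (U x f * cnj (W x' f)))"
    using kr unfolding kraus_def by (intro sum.cong refl) auto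
  also have "\<dots> = (\<Sum>f\<in>cfgs a ?F. \<Sum>x\<in>cfgs a A. U x f * cnj (W x f))"
  proof -
    have dl: "(if P then 1 else 0) * t = (if P then t else (0::complex))" for P t by simp
    show ?thesis using fin by (intro sum.cong refl) (simp add: dl sum.delta)
  qed
  also have "\<dots> = ip a ((A \<union> E) - E') (sl E' e u) (sl E' e' v)"
  proof -
    have eq: "(A \<union> E) - E' = A \<union> ?F" using dis E'E by auto
    have m: "merge E' ee (merge A x f) = merge A x (merge E' ee f)" for ee x f
      using dis E'E by (auto simp: merge_def fun_eq_iff)
    show ?thesis
      unfolding ip_def eq
      apply (subst sum_cfgs_split)
      using dis fin E'E apply auto[3]
      apply (subst sum.swap)
      apply (simp add: sl_def m U_def W_def)
      done
  qed
  finally show ?thesis .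
qed


lemma merge_comm_cfgs:
  assumes "w \<in> cfgs a (N - T)" "t \<in> cfgs a T"
  shows "merge (N - T) w t = merge T t w"
  using assms by (auto simp: merge_def cfgs_def fun_eq_iff)

lemma reduced_full:
  assumes "y \<in> cfgs a {..<n}" "y' \<in> cfgs a {..<n}"
  shows "reduced a n {..<n} \<psi> y y' = \<psi> y * cnj (\<psi> y')"
proof -
  have m: "merge {..<n} y (\<lambda>_. 0) = y" if "y \<in> cfgs a {..<n}" for y
    using that by (auto simp: merge_def cfgs_def fun_eq_iff)
  show ?thesis using assms by (simp add: reduced_def cfgs_empty m)
qed

lemma part1_outer:
  assumes fin: "finite A" "finite B" "finite E" "finite T"
    and TN: "T \<subseteq> {..<n}" and AE: "A \<union> E = {..<n} - T" and BE: "B \<union> E = {..<n}"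
    and dis: "A \<inter> E = {}" "B \<inter> E = {}"
    and H: "apply_ch a A B E Ks (reduced a n ({..<n} - T) \<psi>) = reduced a n {..<n} \<psi>"
    and y: "y \<in> cfgs a {..<n}" "y' \<in> cfgs a {..<n}"
  shows "(\<Sum>K\<leftarrow>Ks. \<Sum>t\<in>cfgs a T. app a A B E K (sl T t \<psi>) y * cnj (app a A B E K (sl T t \<psi>) y'))
         = \<psi> y * cnj (\<psi> y')"
proof -
  have NT: "{..<n} - ({..<n} - T) = T" using TN by auto
  have w: "merge A x (restr E z) \<in> cfgs a ({..<n} - T)" if "x \<in> cfgs a A" "z \<in> cfgs a {..<n}" for x z
  proof -
    have "E \<subseteq> {..<n}" using BE by auto
    then show ?thesis using merge_in_cfgs[OF that(1) restr_in_cfgs[OF that(2)], of E] AE by auto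
  qed
  have rho: "reduced a n ({..<n} - T) \<psi> (merge A x (restr E y)) (merge A x' (restr E y'))
     = (\<Sum>t\<in>cfgs a T. sl T t \<psi> (merge A x (restr E y)) * cnj (sl T t \<psi> (merge A x' (restr E y'))))"
    if "x \<in> cfgs a A" "x' \<in> cfgs a A" for x x'
    using w[OF that(1) y(1)] w[OF that(2) y(2)]
    by (simp add: reduced_def NT sl_def merge_comm_cfgs)
  have "apply_ch a A B E Ks (reduced a n ({..<n} - T) \<psi>) y y' = reduced a n {..<n} \<psi> y y'"
    using H by simp
  then have "(\<Sum>K\<leftarrow>Ks. \<Sum>x\<in>cfgs a A. \<Sum>x'\<in>cfgs a A.
         K (restr B y) x * (\<Sum>t\<in>cfgs a T. sl T t \<psi> (merge A x (restr E y)) * cnj (sl T t \<psi> (merge A x' (restr E y'))))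
           * cnj (K (restr B y') x')) = \<psi> y * cnj (\<psi> y')"
    using y BE by (simp add: apply_ch_def reduced_full rho cong: sum.cong)
  moreover have "(\<Sum>K\<leftarrow>Ks. \<Sum>x\<in>cfgs a A. \<Sum>x'\<in>cfgs a A.
         K (restr B y) x * (\<Sum>t\<in>cfgs a T. sl T t \<psi> (merge A x (restr E y)) * cnj (sl T t \<psi> (merge A x' (restr E y'))))
           * cnj (K (restr B y') x'))
     = (\<Sum>K\<leftarrow>Ks. \<Sum>t\<in>cfgs a T. app a A B E K (sl T t \<psi>) y * cnj (app a A B E K (sl T t \<psi>) y'))"
  proof -
    have "\<And>K. (\<Sum>x\<in>cfgs a A. \<Sum>x'\<in>cfgs a A.
         K (restr B y) x * (\<Sum>t\<in>cfgs a T. sl T t \<psi> (merge A x (restr E y)) * cnj (sl T t \<psi> (merge A x' (restr E y'))))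
           * cnj (K (restr B y') x'))
       = (\<Sum>t\<in>cfgs a T. app a A B E K (sl T t \<psi>) y * cnj (app a A B E K (sl T t \<psi>) y'))"
    proof -
      fix K :: qop
      have "(\<Sum>x\<in>cfgs a A. \<Sum>x'\<in>cfgs a A.
         K (restr B y) x * (\<Sum>t\<in>cfgs a T. sl T t \<psi> (merge A x (restr E y)) * cnj (sl T t \<psi> (merge A x' (restr E y'))))
           * cnj (K (restr B y') x'))
         = (\<Sum>x\<in>cfgs a A. \<Sum>x'\<in>cfgs a A. \<Sum>t\<in>cfgs a T.
             (K (restr B y) x * sl T t \<psi> (merge A x (restr E y))) * cnj (K (restr B y') x' * sl T t \<psi> (merge A x' (restr E y'))))"
        by (simp add: sum_distrib_left sum_distrib_right mult_ac)
      also have "\<dots> = (\<Sum>x\<in>cfgs a A. \<Sum>t\<in>cfgs a T. \<Sum>x'\<in>cfgs a A.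
             (K (restr B y) x * sl T t \<psi> (merge A x (restr E y))) * cnj (K (restr B y') x' * sl T t \<psi> (merge A x' (restr E y'))))"
        by (rule sum.cong[OF refl], rule sum.swap)
      also have "\<dots> = (\<Sum>t\<in>cfgs a T. \<Sum>x\<in>cfgs a A. \<Sum>x'\<in>cfgs a A.
             (K (restr B y) x * sl T t \<psi> (merge A x (restr E y))) * cnj (K (restr B y') x' * sl T t \<psi> (merge A x' (restr E y'))))"
        by (rule sum.swap)
      also have "\<dots> = (\<Sum>t\<in>cfgs a T. app a A B E K (sl T t \<psi>) y * cnj (app a A B E K (sl T t \<psi>) y'))"
        by (simp add: app_def sum_product cnj_sum)
      finally show "?thesis K" .
    qed
    then show ?thesis by simp
  qed
  ultimately show ?thesis by simp
qed


lemma sum_mcnj_zero: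
  assumes "finite D" "(\<Sum>y\<in>D. f y * cnj (f y)) = 0" "y \<in> D"
  shows "f y = 0"
proof -
  have "complex_of_real (\<Sum>y\<in>D. (norm (f y))\<^sup>2) = (\<Sum>y\<in>D. f y * cnj (f y))"
    by (simp only: of_real_sum complex_norm_square)
  from this assms(2) have "complex_of_real (\<Sum>y\<in>D. (norm (f y))\<^sup>2) = 0" by (rule trans)
  then have "(\<Sum>y\<in>D. (norm (f y))\<^sup>2) = 0" by (simp only: of_real_eq_0_iff)
  then have "(norm (f y))\<^sup>2 = 0" using assms(1,3) by (simp add: sum_nonneg_eq_0_iff)
  then show ?thesis by simp
qed

lemma sum3_rev: "(\<Sum>j\<in>J. \<Sum>b\<in>B. \<Sum>c\<in>C. g j b c) = (\<Sum>c\<in>C. \<Sum>b\<in>B. \<Sum>j\<in>J. (g j b c :: 'z::comm_monoid_add))"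
proof -
  have "(\<Sum>j\<in>J. \<Sum>b\<in>B. \<Sum>c\<in>C. g j b c) = (\<Sum>b\<in>B. \<Sum>j\<in>J. \<Sum>c\<in>C. g j b c)" by (rule sum.swap)
  also have "\<dots> = (\<Sum>b\<in>B. \<Sum>c\<in>C. \<Sum>j\<in>J. g j b c)" by (rule sum.cong[OF refl], rule sum.swap)
  also have "\<dots> = (\<Sum>c\<in>C. \<Sum>b\<in>B. \<Sum>j\<in>J. g j b c)" by (rule sum.swap)
  finally show ?thesis .
qed

lemma pure_decomp:
  fixes W :: "'k \<Rightarrow> qvec"
  assumes fin: "finite J" "finite D"
    and outer: "\<And>y y'. y \<in> D \<Longrightarrow> y' \<in> D \<Longrightarrow> (\<Sum>j\<in>J. W j y * cnj (W j y')) = \<psi> y * cnj (\<psi> y')"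
    and norm1: "(\<Sum>y\<in>D. \<psi> y * cnj (\<psi> y)) = 1"
    and j: "j \<in> J"
  shows "\<exists>c. \<forall>y\<in>D. W j y = c * \<psi> y"
proof -
  define ipD where "ipD f g = (\<Sum>y\<in>D. f y * cnj (g y))" for f g :: qvec
  have expand: "ipD f g * cnj (ipD f g) = (\<Sum>y\<in>D. \<Sum>y'\<in>D. (f y * cnj (f y')) * (cnj (g y) * g y'))" for f g
    unfolding ipD_def cnj_sum sum_product by (intro sum.cong refl) (simp add: mult_ac)
  have b: "(\<Sum>j\<in>J. ipD (W j) g * cnj (ipD (W j) g)) = ipD \<psi> g * cnj (ipD \<psi> g)" for g
  proof -
    have "(\<Sum>j\<in>J. ipD (W j) g * cnj (ipD (W j) g))
        = (\<Sum>y\<in>D. \<Sum>y'\<in>D. (\<Sum>j\<in>J. W j y * cnj (W j y')) * (cnj (g y) * g y'))"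
      unfolding expand sum_distrib_right by (rule trans[OF sum.swap], rule sum.cong[OF refl], rule sum.swap)
    also have "\<dots> = (\<Sum>y\<in>D. \<Sum>y'\<in>D. (\<psi> y * cnj (\<psi> y')) * (cnj (g y) * g y'))"
      using outer by (intro sum.cong refl) simp
    also have "\<dots> = ipD \<psi> g * cnj (ipD \<psi> g)" unfolding expand ..
    finally show ?thesis .
  qed
  define c0 where "c0 = ipD (W j) \<psi>"
  define g where "g = (\<lambda>y. W j y - c0 * \<psi> y)"
  have psi_g: "ipD \<psi> g = 0"
  proof -
    have "ipD \<psi> g = (\<Sum>y\<in>D. \<psi> y * cnj (W j y)) - cnj c0 * (\<Sum>y\<in>D. \<psi> y * cnj (\<psi> y))"
      by (simp add: ipD_def g_def algebra_simps sum_subtractf sum_distrib_left)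
    also have "(\<Sum>y\<in>D. \<psi> y * cnj (W j y)) = cnj c0"
      by (simp add: c0_def ipD_def cnj_sum mult.commute)
    finally show ?thesis using norm1 by simp
  qed
  have "(\<Sum>j\<in>J. ipD (W j) g * cnj (ipD (W j) g)) = 0"
    using b[of g] psi_g by simp
  then have Wg: "ipD (W j) g = 0"
    using sum_mcnj_zero[OF fin(1), of "\<lambda>j. ipD (W j) g"] j by blast
  have "ipD g g = ipD (W j) g - c0 * ipD \<psi> g"
    by (simp add: ipD_def g_def algebra_simps sum_subtractf sum_distrib_left sum.distrib)
  then have "ipD g g = 0" using Wg psi_g by simp
  then have "\<forall>y\<in>D. g y = 0"
    using sum_mcnj_zero[OF fin(2), of g] unfolding ipD_def by blast
  then show ?thesis unfolding g_def by auto
qed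


lemma app_sl_add: "app a A B E K (sl T t (\<psi> + \<phi>)) y = app a A B E K (sl T t \<psi>) y + app a A B E K (sl T t \<phi>) y"
  by (simp add: app_def sl_def algebra_simps sum.distrib)

lemma app_sl_scale: "app a A B E K (sl T t (vscale c \<psi>)) y = c * app a A B E K (sl T t \<psi>) y"
  by (simp add: app_def sl_def sum_distrib_left mult_ac)

lemma eigen_const:
  fixes L :: "qvec \<Rightarrow> qvec"
  assumes sub: "V.subspace C" and zero_out: "\<And>\<psi> y. \<psi> \<in> C \<Longrightarrow> y \<notin> D \<Longrightarrow> \<psi> y = 0"
    and add: "\<And>\<psi> \<phi> y. L (\<psi> + \<phi>) y = L \<psi> y + L \<phi> y"
    and scl: "\<And>c \<psi> y. L (vscale c \<psi>) y = c * L \<psi> y"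
    and eig: "\<And>\<psi>. \<psi> \<in> C \<Longrightarrow> \<exists>c. \<forall>y\<in>D. L \<psi> y = c * \<psi> y"
  shows "\<exists>c. \<forall>\<psi>\<in>C. \<forall>y\<in>D. L \<psi> y = c * \<psi> y"
proof (cases "\<forall>\<psi>\<in>C. \<forall>y\<in>D. \<psi> y = 0")
  case True
  have L0: "L \<psi> y = 0" if "\<psi> \<in> C" for \<psi> y
  proof -
    have e: "\<psi> = vscale 0 \<psi>" using True that zero_out by (auto simp: fun_eq_iff vscale_def)
    show ?thesis by (metis e scl mult_zero_left)
  qed
  show ?thesis by (rule exI[of _ 0]) (simp add: L0)
next
  case False
  then obtain \<psi>0 y0 where p0: "\<psi>0 \<in> C" "y0 \<in> D" "\<psi>0 y0 \<noteq> 0" by auto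
  obtain c0 where c0: "\<forall>y\<in>D. L \<psi>0 y = c0 * \<psi>0 y" using eig[OF p0(1)] by auto
  have "\<forall>y\<in>D. L \<psi> y = c0 * \<psi> y" if psi: "\<psi> \<in> C" for \<psi>
  proof -
    obtain c1 where c1: "\<forall>y\<in>D. L \<psi> y = c1 * \<psi> y" using eig[OF psi] by auto
    have s: "\<psi>0 + \<psi> \<in> C" using sub p0(1) psi by (simp add: V.subspace_add)
    obtain c2 where c2: "\<forall>y\<in>D. L (\<psi>0 + \<psi>) y = c2 * (\<psi>0 + \<psi>) y" using eig[OF s] by auto
    have rel: "(c0 - c2) * \<psi>0 y = (c2 - c1) * \<psi> y" if "y \<in> D" for y
      using c0 c1 c2 add[of \<psi>0 \<psi> y] that by (simp add: algebra_simps)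
    show ?thesis
    proof (cases "c0 = c2")
      case True
      then show ?thesis using rel c1 by (auto simp: algebra_simps)
    next
      case False
      define lam where "lam = (c2 - c1) / (c0 - c2)"
      have p0eq: "\<psi>0 y = lam * \<psi> y" if "y \<in> D" for y
        using rel[OF that] False by (simp add: lam_def field_simps)
      have "lam \<noteq> 0" using p0eq[OF p0(2)] p0(3) by auto
      have "\<psi> = vscale (1 / lam) \<psi>0"
      proof
        fix y show "\<psi> y = vscale (1 / lam) \<psi>0 y"
        proof (cases "y \<in> D")
          case True then show ?thesis using p0eq[OF True] \<open>lam \<noteq> 0\<close> by simp
        next
          case False then show ?thesis using zero_out[OF psi False] zero_out[OF p0(1) False] by simp
        qed
      qed
      then have "L \<psi> y = (1 / lam) * L \<psi>0 y" for y by (metis scl)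
      then show ?thesis using c0 p0eq \<open>lam \<noteq> 0\<close> by simp
    qed
  qed
  then show ?thesis by blast
qed

lemma part1_state:
  assumes fin: "finite A" "finite B" "finite E" "finite T"
    and TN: "T \<subseteq> {..<n}" and AE: "A \<union> E = {..<n} - T" and BE: "B \<union> E = {..<n}"
    and dis: "A \<inter> E = {}" "B \<inter> E = {}"
    and H: "apply_ch a A B E Ks (reduced a n ({..<n} - T) \<psi>) = reduced a n {..<n} \<psi>"
    and n1: "(\<Sum>x\<in>cfgs a {..<n}. (cmod (\<psi> x))\<^sup>2) = 1"
    and K: "K \<in> set Ks" and t: "t \<in> cfgs a T"
  shows "\<exists>c. \<forall>y\<in>cfgs a {..<n}. app a A B E K (sl T t \<psi>) y = c * \<psi> y"
proof -
  obtain i where i: "i < length Ks" "K = Ks ! i" using K by (auto simp: in_set_conv_nth)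
  let ?J = "{..<length Ks} \<times> cfgs a T"
  let ?W = "\<lambda>(i,t). app a A B E (Ks ! i) (sl T t \<psi>)"
  have outer: "(\<Sum>j\<in>?J. ?W j y * cnj (?W j y')) = \<psi> y * cnj (\<psi> y')"
    if "y \<in> cfgs a {..<n}" "y' \<in> cfgs a {..<n}" for y y'
  proof -
    have "(\<Sum>j\<in>?J. ?W j y * cnj (?W j y'))
       = (\<Sum>K\<leftarrow>Ks. \<Sum>t\<in>cfgs a T. app a A B E K (sl T t \<psi>) y * cnj (app a A B E K (sl T t \<psi>) y'))"
      unfolding sum_list_idx sum.cartesian_product by (intro sum.cong refl) auto
    also have "\<dots> = \<psi> y * cnj (\<psi> y')"
      by (rule part1_outer[OF fin TN AE BE dis H that])
    finally show ?thesis .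
  qed
  have norm1: "(\<Sum>y\<in>cfgs a {..<n}. \<psi> y * cnj (\<psi> y)) = 1"
  proof -
    have "(\<Sum>y\<in>cfgs a {..<n}. \<psi> y * cnj (\<psi> y)) = complex_of_real (\<Sum>x\<in>cfgs a {..<n}. (cmod (\<psi> x))\<^sup>2)"
      by (simp only: of_real_sum complex_norm_square)
    then show ?thesis using n1 by simp
  qed
  have "\<exists>c. \<forall>y\<in>cfgs a {..<n}. ?W (i,t) y = c * \<psi> y"
    by (rule pure_decomp[OF _ _ outer norm1]) (use i t fin in auto)
  then show ?thesis using i by simp
qed


lemma part1_C:
  assumes fin: "finite A" "finite B" "finite E" "finite T"
    and TN: "T \<subseteq> {..<n}" and AE: "A \<union> E = {..<n} - T" and BE: "B \<union> E = {..<n}"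
    and dis: "A \<inter> E = {}" "B \<inter> E = {}"
    and Cq: "C \<subseteq> qvecs a n" and sub: "V.subspace C"
    and H: "\<forall>\<psi>. code_state a n C \<psi> \<longrightarrow>
              apply_ch a A B E Ks (reduced a n ({..<n} - T) \<psi>) = reduced a n {..<n} \<psi>"
  shows "\<exists>c. \<forall>K\<in>set Ks. \<forall>t\<in>cfgs a T. \<forall>\<psi>\<in>C. \<forall>y\<in>cfgs a {..<n}.
            app a A B E K (sl T t \<psi>) y = c K t * \<psi> y"
proof -
  have zo: "\<psi> y = 0" if "\<psi> \<in> C" "y \<notin> cfgs a {..<n}" for \<psi> y
    using that Cq by (auto simp: qvecs_def)
  have "\<exists>c. \<forall>\<psi>\<in>C. \<forall>y\<in>cfgs a {..<n}. app a A B E K (sl T t \<psi>) y = c * \<psi> y"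
    if K: "K \<in> set Ks" and t: "t \<in> cfgs a T" for K t
  proof (rule eigen_const[OF sub, where L="\<lambda>\<psi>. app a A B E K (sl T t \<psi>)"])
    show "\<And>\<psi> y. \<psi> \<in> C \<Longrightarrow> y \<notin> cfgs a {..<n} \<Longrightarrow> \<psi> y = 0" by (rule zo)
    show "\<And>\<psi> \<phi> y. app a A B E K (sl T t (\<psi> + \<phi>)) y = app a A B E K (sl T t \<psi>) y + app a A B E K (sl T t \<phi>) y"
      by (rule app_sl_add)
    show "\<And>c \<psi> y. app a A B E K (sl T t (vscale c \<psi>)) y = c * app a A B E K (sl T t \<psi>) y"
      by (rule app_sl_scale)
    fix \<psi> assume psi: "\<psi> \<in> C"
    show "\<exists>c. \<forall>y\<in>cfgs a {..<n}. app a A B E K (sl T t \<psi>) y = c * \<psi> y"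
    proof (cases "\<forall>y\<in>cfgs a {..<n}. \<psi> y = 0")
      case True
      have e: "\<psi> = vscale 0 \<psi>" using True zo[OF psi] by (auto simp: fun_eq_iff vscale_def)
      have "app a A B E K (sl T t \<psi>) y = 0" for y
        by (metis e app_sl_scale mult_zero_left)
      then show ?thesis by auto
    next
      case False
      then obtain y0 where y0: "y0 \<in> cfgs a {..<n}" "\<psi> y0 \<noteq> 0" by auto
      define s where "s = (\<Sum>x\<in>cfgs a {..<n}. (cmod (\<psi> x))\<^sup>2)"
      have "(cmod (\<psi> y0))\<^sup>2 \<le> s" unfolding s_def
        by (rule member_le_sum) (use y0 in auto)
      then have spos: "s > 0" using y0 by (smt (verit) zero_less_norm_iff zero_less_power)
      define \<psi>' where "\<psi>' = vscale (complex_of_real (1 / sqrt s)) \<psi>"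
      have cs: "code_state a n C \<psi>'"
        unfolding code_state_def
      proof
        show "\<psi>' \<in> C" unfolding \<psi>'_def using sub psi by (rule V.subspace_scale)
        have "(\<Sum>x\<in>cfgs a {..<n}. (cmod (\<psi>' x))\<^sup>2) = (\<Sum>x\<in>cfgs a {..<n}. (1 / s) * (cmod (\<psi> x))\<^sup>2)"
          using spos by (intro sum.cong refl) (simp add: \<psi>'_def norm_divide power_divide)
        also have "\<dots> = (1 / s) * s" unfolding s_def by (simp add: sum_distrib_left)
        also have "\<dots> = 1" using spos by simp
        finally show "(\<Sum>x\<in>cfgs a {..<n}. (cmod (\<psi>' x))\<^sup>2) = 1" .
      qed
      obtain c where c: "\<forall>y\<in>cfgs a {..<n}. app a A B E K (sl T t \<psi>') y = c * \<psi>' y"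
        using part1_state[OF fin TN AE BE dis H[rule_format, OF cs] cs[unfolded code_state_def, THEN conjunct2] K t]
        by auto
      have e: "\<psi> = vscale (complex_of_real (sqrt s)) \<psi>'"
        using spos by (auto simp: \<psi>'_def fun_eq_iff vscale_def)
      have "app a A B E K (sl T t \<psi>) y = c * \<psi> y" if "y \<in> cfgs a {..<n}" for y
      proof -
        have "app a A B E K (sl T t \<psi>) y = complex_of_real (sqrt s) * app a A B E K (sl T t \<psi>') y"
          by (subst e) (rule app_sl_scale)
        also have "\<dots> = c * \<psi> y" 
        proof -
          have "\<psi> y = complex_of_real (sqrt s) * \<psi>' y" using fun_cong[OF e, of y] by simp
          then show ?thesis using c that by simp
        qed
        finally show ?thesis .
      qed
      then show ?thesis by auto
    qed
  qed
  then show ?thesis by metis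
qed

definition KL :: "nat \<Rightarrow> nat \<Rightarrow> qvec set \<Rightarrow> nat set \<Rightarrow> bool" where
  "KL a n C T \<longleftrightarrow> (\<exists>M. \<forall>\<psi>\<in>C. \<forall>\<phi>\<in>C. \<forall>t\<in>cfgs a T. \<forall>t'\<in>cfgs a T.
      ip a ({..<n} - T) (sl T t \<psi>) (sl T t' \<phi>) = M t t' * ip a {..<n} \<psi> \<phi>)"

lemma KL_empty: "KL a n C {}"
  unfolding KL_def
  by (rule exI[of _ "\<lambda>_ _. 1"]) (simp add: sl_def merge_def)

lemma ip_scale: "ip a D (\<lambda>w. c * f w) (\<lambda>w. c' * g w) = c * cnj c' * ip a D f g"
  by (simp add: ip_def sum_distrib_left mult_ac)

lemma compose_KL:
  assumes fin: "finite A" "finite B" "finite E" "finite T"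
    and TN: "T \<subseteq> {..<n}" and AE: "A \<union> E = {..<n} - T" and BE: "B \<union> E = {..<n}"
    and dis: "A \<inter> E = {}" "B \<inter> E = {}" and kr: "kraus a A B Ks"
    and c: "\<forall>K\<in>set Ks. \<forall>t\<in>cfgs a T. \<forall>\<psi>\<in>C. \<forall>y\<in>cfgs a {..<n}.
            app a A B E K (sl T t \<psi>) y = c K t * \<psi> y"
    and KLE: "KL a n C E'" and E'E: "E' \<subseteq> E"
  shows "KL a n C (E' \<union> T)"
proof -
  obtain M where M: "\<forall>\<psi>\<in>C. \<forall>\<phi>\<in>C. \<forall>e\<in>cfgs a E'. \<forall>e'\<in>cfgs a E'.
      ip a ({..<n} - E') (sl E' e \<psi>) (sl E' e' \<phi>) = M e e' * ip a {..<n} \<psi> \<phi>"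
    using KLE unfolding KL_def by blast
  define M' where "M' z z' = (\<Sum>K\<leftarrow>Ks. c K (restr T z) * cnj (c K (restr T z'))) * M (restr E' z) (restr E' z')" for z z'
  have E'N: "E' \<subseteq> {..<n}" using E'E BE by auto
  have ET: "E' \<inter> T = {}" using E'E AE by auto
  have main: "ip a ({..<n} - (E' \<union> T)) (sl (E' \<union> T) z \<psi>) (sl (E' \<union> T) z' \<phi>) = M' z z' * ip a {..<n} \<psi> \<phi>"
    if psi: "\<psi> \<in> C" "\<phi> \<in> C" and z: "z \<in> cfgs a (E' \<union> T)" "z' \<in> cfgs a (E' \<union> T)" for \<psi> \<phi> z z'
  proof -
    define t where "t = restr T z"
    define t' where "t' = restr T z'"
    define e where "e = restr E' z"
    define e' where "e' = restr E' z'"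
    have tc: "t \<in> cfgs a T" "t' \<in> cfgs a T" unfolding t_def t'_def using z by (auto intro!: restr_in_cfgs)
    have ec: "e \<in> cfgs a E'" "e' \<in> cfgs a E'" unfolding e_def e'_def using z by (auto intro!: restr_in_cfgs)
    have zm: "merge T (restr T w) (restr E' w) = w" if "w \<in> cfgs a (E' \<union> T)" for w
      using that by (auto simp: merge_def restr_def cfgs_def fun_eq_iff)
    have s1: "sl (E' \<union> T) z \<psi> = sl E' e (sl T t \<psi>)"
      using zm[OF z(1)] by (simp add: sl_sl t_def e_def Un_commute)
    have s2: "sl (E' \<union> T) z' \<phi> = sl E' e' (sl T t' \<phi>)"
      using zm[OF z(2)] by (simp add: sl_sl t'_def e'_def Un_commute)
    have d1: "{..<n} - (E' \<union> T) = (A \<union> E) - E'" using AE by auto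
    have d2: "(B \<union> E) - E' = {..<n} - E'" using BE by auto
    have "ip a ({..<n} - (E' \<union> T)) (sl (E' \<union> T) z \<psi>) (sl (E' \<union> T) z' \<phi>)
        = (\<Sum>K\<leftarrow>Ks. ip a ((B \<union> E) - E') (sl E' e (app a A B E K (sl T t \<psi>))) (sl E' e' (app a A B E K (sl T t' \<phi>))))"
      unfolding s1 s2 d1 by (rule TP[OF kr fin(1-3) dis E'E ec, symmetric])
    also have "\<dots> = (\<Sum>K\<leftarrow>Ks. c K t * cnj (c K t') * (M e e' * ip a {..<n} \<psi> \<phi>))"
    proof (rule arg_cong[where f=sum_list], rule map_cong[OF refl])
      fix K assume K: "K \<in> set Ks"
      have "ip a ((B \<union> E) - E') (sl E' e (app a A B E K (sl T t \<psi>))) (sl E' e' (app a A B E K (sl T t' \<phi>)))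
          = ip a ({..<n} - E') (\<lambda>w. c K t * sl E' e \<psi> w) (\<lambda>w. c K t' * sl E' e' \<phi> w)"
        unfolding d2
      proof (rule ip_cong)
        fix w assume w: "w \<in> cfgs a ({..<n} - E')"
        have "merge E' e w \<in> cfgs a {..<n}" "merge E' e' w \<in> cfgs a {..<n}"
          using merge_in_cfgs[OF ec(1) w] merge_in_cfgs[OF ec(2) w] E'N
          by (simp_all add: Un_absorb1 Un_Diff_cancel)
        then show "sl E' e (app a A B E K (sl T t \<psi>)) w = c K t * sl E' e \<psi> w"
             "sl E' e' (app a A B E K (sl T t' \<phi>)) w = c K t' * sl E' e' \<phi> w"
          using c K tc psi by (simp_all add: sl_def)
      qed
      also have "\<dots> = c K t * cnj (c K t') * (M e e' * ip a {..<n} \<psi> \<phi>)"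
        using M psi ec by (simp add: ip_scale)
      finally show "ip a ((B \<union> E) - E') (sl E' e (app a A B E K (sl T t \<psi>))) (sl E' e' (app a A B E K (sl T t' \<phi>)))
          = c K t * cnj (c K t') * (M e e' * ip a {..<n} \<psi> \<phi>)" .
    qed
    also have "\<dots> = M' z z' * ip a {..<n} \<psi> \<phi>"
      unfolding M'_def sum_list_idx t_def t'_def e_def e'_def
      by (simp add: sum_distrib_right sum_distrib_left mult_ac)
    finally show ?thesis .
  qed
  show ?thesis unfolding KL_def using main by blast
qed


lemma decodable_KL:
  assumes Cq: "C \<subseteq> qvecs a n" and sub: "V.subspace C" and SN: "S \<subseteq> {..<n}"
    and dec: "decodable a n C S"
  shows "KL a n C S"
proof -
  obtain Ks where kr: "kraus a ({..<n} - S) {..<n} Ks" and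
    H: "\<forall>\<psi>. code_state a n C \<psi> \<longrightarrow>
        apply_ch a ({..<n} - S) {..<n} {} Ks (reduced a n ({..<n} - S) \<psi>) = reduced a n {..<n} \<psi>"
    using dec unfolding decodable_def by blast
  have finS: "finite S" using SN finite_subset by blast
  obtain c where c: "\<forall>K\<in>set Ks. \<forall>t\<in>cfgs a S. \<forall>\<psi>\<in>C. \<forall>y\<in>cfgs a {..<n}.
            app a ({..<n} - S) {..<n} {} K (sl S t \<psi>) y = c K t * \<psi> y"
    using part1_C[of "{..<n} - S" "{..<n}" "{}" S n C a Ks] finS SN Cq sub H by auto
  have "KL a n C ({} \<union> S)"
    by (rule compose_KL[OF _ _ _ finS SN _ _ _ _ kr c KL_empty]) auto
  then show ?thesis by simp
qed

lemma local_KL: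
  assumes Cq: "C \<subseteq> qvecs a n" and sub: "V.subspace C" and loc: "qLRC_locality a n C r"
    and i: "i < n"
  obtains I where "i \<in> I" "I \<subseteq> {..<n}" "card I \<le> r"
    "\<And>E'. KL a n C E' \<Longrightarrow> E' \<subseteq> {..<n} \<Longrightarrow> E' \<inter> I = {} \<Longrightarrow> KL a n C (E' \<union> {i})"
proof -
  obtain I Ks where I: "i \<in> I" "I \<subseteq> {..<n}" "card I \<le> r" and kr: "kraus a (I - {i}) I Ks"
    and H: "\<forall>\<psi>. code_state a n C \<psi> \<longrightarrow>
         apply_ch a (I - {i}) I ({..<n} - I) Ks (reduced a n ({..<n} - {i}) \<psi>) = reduced a n {..<n} \<psi>"
    using loc i unfolding qLRC_locality_def by blast
  have finI: "finite I" using I(2) finite_subset by blast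
  have AE: "(I - {i}) \<union> ({..<n} - I) = {..<n} - {i}" using I by auto
  have BE: "I \<union> ({..<n} - I) = {..<n}" using I by auto
  obtain c where c: "\<forall>K\<in>set Ks. \<forall>t\<in>cfgs a {i}. \<forall>\<psi>\<in>C. \<forall>y\<in>cfgs a {..<n}.
            app a (I - {i}) I ({..<n} - I) K (sl {i} t \<psi>) y = c K t * \<psi> y"
  proof -
    have f1: "finite (I - {i})" "finite ({..<n} - I)" "finite {i}" using finI by auto
    have d: "(I - {i}) \<inter> ({..<n} - I) = {}" "I \<inter> ({..<n} - I) = {}" by auto
    have "{i} \<subseteq> {..<n}" using i by auto
    from part1_C[OF f1(1) finI f1(2) f1(3) this AE BE d Cq sub H] show ?thesis using that by blast
  qed
  have "KL a n C (E' \<union> {i})" if "KL a n C E'" "E' \<subseteq> {..<n}" "E' \<inter> I = {}" for E'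
    by (rule compose_KL[OF _ _ _ _ _ AE BE _ _ kr c that(1)]) (use finI i that in auto)
  then show ?thesis using that I by blast
qed

lemma build:
  assumes Cq: "C \<subseteq> qvecs a n" and sub: "V.subspace C" and loc: "qLRC_locality a n C r"
    and dec: "decodes_below a n C d" and r: "r > 0"
  shows "W \<subseteq> {..<n} \<Longrightarrow> \<exists>Z\<subseteq>W. KL a n C Z \<and> card Z \<ge> min (card W) (d - 1) + (card W - (d - 1)) div r"
proof (induction "card W" arbitrary: W rule: less_induct)
  case less
  have finW: "finite W" using less.prems finite_subset by blast
  show ?case
  proof (cases "card W < d - 1 + r")
    case True
    then have z: "(card W - (d - 1)) div r = 0" using r by simp
    obtain Z where Z: "Z \<subseteq> W" "card Z = min (card W) (d - 1)"
      using obtain_subset_with_card_n[of "min (card W) (d - 1)" W] by auto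
    have "KL a n C Z"
    proof (cases "Z = {}")
      case True then show ?thesis using KL_empty by simp
    next
      case False
      have "finite Z" using Z finW finite_subset by blast
      then have "card Z > 0" using False by auto
      then have "card Z < d" using Z by auto
      then have "decodable a n C Z" using dec Z less.prems unfolding decodes_below_def by auto
      then show ?thesis using decodable_KL[OF Cq sub] Z less.prems by auto
    qed
    then show ?thesis using Z z by auto
  next
    case False
    then have "W \<noteq> {}" using r by auto
    then obtain i where iW: "i \<in> W" by auto
    then have i: "i < n" using less.prems by auto
    obtain I where I: "i \<in> I" "I \<subseteq> {..<n}" "card I \<le> r"
      and step: "\<And>E'. KL a n C E' \<Longrightarrow> E' \<subseteq> {..<n} \<Longrightarrow> E' \<inter> I = {} \<Longrightarrow> KL a n C (E' \<union> {i})"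
      using local_KL[OF Cq sub loc i] by blast
    define W' where "W' = W - I"
    have finI: "finite I" using I(2) finite_subset by blast
    have cW': "card W' \<ge> card W - card I" unfolding W'_def using finI by (simp add: diff_card_le_card_Diff)
    have ltW': "card W' < card W" unfolding W'_def using finW iW I(1) by (intro psubset_card_mono) auto
    have W'N: "W' \<subseteq> {..<n}" using less.prems W'_def by auto
    obtain Z' where Z': "Z' \<subseteq> W'" "KL a n C Z'"
      "card Z' \<ge> min (card W') (d - 1) + (card W' - (d - 1)) div r"
      using less.hyps[OF ltW' W'N] by blast
    have Z'N: "Z' \<subseteq> {..<n}" using Z' W'N by auto
    have Z'I: "Z' \<inter> I = {}" using Z' W'_def by auto
    have KLZ: "KL a n C (Z' \<union> {i})" by (rule step[OF Z'(2) Z'N Z'I])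
    have iZ': "i \<notin> Z'" using Z'I I(1) by auto
    have finZ': "finite Z'" using Z'N finite_subset by blast
    have cardZ: "card (Z' \<union> {i}) = card Z' + 1" using iZ' finZ' by simp
    have ge: "card W - r \<ge> d - 1" using False by simp
    have cW'2: "card W' \<ge> card W - r" using cW' I(3) by simp
    then have m: "min (card W') (d - 1) = d - 1" using ge by simp
    have dv: "(card W - (d - 1)) div r = (card W - (d - 1) - r) div r + 1"
      using False r by (simp add: le_div_geq)
    have "(card W - (d - 1) - r) div r \<le> (card W' - (d - 1)) div r"
      using cW'2 by (intro div_le_mono) simp
    moreover have "min (card W) (d - 1) = d - 1" using ge by simp
    ultimately have "card (Z' \<union> {i}) \<ge> min (card W) (d - 1) + (card W - (d - 1)) div r"
      using Z'(3) m dv cardZ by simp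
    moreover have "Z' \<union> {i} \<subseteq> W" using Z' W'_def iW by auto
    ultimately show ?thesis using KLZ by blast
  qed
qed


definition delta :: "cfg \<Rightarrow> qvec" where
  "delta z = (\<lambda>w. if w = z then 1 else 0)"

definition rs :: "nat \<Rightarrow> nat set \<Rightarrow> qvec \<Rightarrow> qvec" where
  "rs a P f = (\<lambda>z. if z \<in> cfgs a P then f z else 0)"

definition gens :: "nat \<Rightarrow> nat \<Rightarrow> qvec set \<Rightarrow> nat set \<Rightarrow> qvec set" where
  "gens a n C P = {rs a P (sl ({..<n} - P) q \<psi>) | \<psi> q. \<psi> \<in> C \<and> q \<in> cfgs a ({..<n} - P)}"

lemma supp_span:
  assumes "finite P" "\<And>w. w \<notin> cfgs a P \<Longrightarrow> f w = 0"
  shows "f \<in> V.span (delta ` cfgs a P)"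
proof -
  have "f = (\<Sum>z\<in>cfgs a P. vscale (f z) (delta z))"
  proof
    fix w
    have e: "\<And>i. f i * (if w = i then 1 else 0) = (if w = i then f i else 0)" by simp
    show "f w = (\<Sum>z\<in>cfgs a P. vscale (f z) (delta z)) w"
      using assms by (simp add: sum_fun_apply delta_def e sum.delta')
  qed
  also have "\<dots> \<in> V.span (delta ` cfgs a P)"
    by (intro V.span_sum V.span_scale V.span_base) auto
  finally show ?thesis .
qed

lemma supp_subspace: "V.subspace {f. \<forall>w. w \<notin> D \<longrightarrow> f w = 0}"
  by (auto simp: V.subspace_def)

lemma indep_le_dim:
  assumes P: "finite P" and B: "V.independent B" "B \<subseteq> V.span G"
    and G: "\<And>g w. g \<in> G \<Longrightarrow> w \<notin> cfgs a P \<Longrightarrow> g w = 0"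
  shows "finite B \<and> card B \<le> V.dim G"
proof -
  obtain Bg where Bg: "Bg \<subseteq> G" "V.independent Bg" "G \<subseteq> V.span Bg" "card Bg = V.dim G"
    using V.basis_exists by blast
  have "Bg \<subseteq> V.span (delta ` cfgs a P)"
    using Bg(1) G supp_span[OF P] by blast
  then have fBg: "finite Bg"
    using V.independent_span_bound[OF finite_imageI[OF finite_cfgs[OF P]] Bg(2)] by auto
  have "V.span G \<subseteq> V.span Bg" using Bg(3) by (simp add: V.span_minimal)
  then have "B \<subseteq> V.span Bg" using B(2) by auto
  then show ?thesis using V.independent_span_bound[OF fBg B(1)] Bg(4) by auto
qed

lemma ip_add2: "ip a D f (g + h) = ip a D f g + ip a D f h"
  by (simp add: ip_def algebra_simps sum.distrib)
lemma ip_scale2: "ip a D f (vscale c g) = cnj c * ip a D f g"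
  by (simp add: ip_def sum_distrib_left mult_ac)
lemma ip_add1: "ip a D (g + h) f = ip a D g f + ip a D h f"
  by (simp add: ip_def algebra_simps sum.distrib)
lemma ip_scale1: "ip a D (vscale c g) f = c * ip a D g f"
  by (simp add: ip_def sum_distrib_left mult_ac)

lemma ip_sum1: "finite I \<Longrightarrow> ip a D (\<Sum>i\<in>I. F i) f = (\<Sum>i\<in>I. ip a D (F i) f)"
  by (simp add: ip_def sum_fun_apply sum_distrib_right) (rule sum.swap)

lemma ip_self_zero:
  assumes "finite D" "ip a D f f = 0" "z \<in> cfgs a D"
  shows "f z = 0"
  using sum_mcnj_zero[of "cfgs a D" f z] assms unfolding ip_def by auto

lemma perp_span:
  assumes "\<And>g. g \<in> G \<Longrightarrow> ip a D f g = 0" "h \<in> V.span G"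
  shows "ip a D f h = 0"
proof -
  have "V.subspace {h. ip a D f h = 0}"
    by (auto simp: V.subspace_def ip_add2 ip_scale2) (simp add: ip_def)
  then have "V.span G \<subseteq> {h. ip a D f h = 0}"
    using assms(1) by (intro V.span_minimal) auto
  then show ?thesis using assms(2) by auto
qed


definition ctr :: "nat \<Rightarrow> nat \<Rightarrow> nat set \<Rightarrow> qvec \<Rightarrow> qvec \<Rightarrow> qvec" where
  "ctr a n X \<psi> f = (\<lambda>z. \<Sum>x\<in>cfgs a X. cnj (f x) * rs a ({..<n} - X) (sl X x \<psi>) z)"

definition Bf :: "nat \<Rightarrow> nat set \<Rightarrow> (cfg \<Rightarrow> cfg \<Rightarrow> complex) \<Rightarrow> qvec \<Rightarrow> qvec \<Rightarrow> complex" where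
  "Bf a X M f g = (\<Sum>x\<in>cfgs a X. \<Sum>x'\<in>cfgs a X. cnj (f x) * g x' * M x x')"

lemma gens_supp: "g \<in> gens a n C P \<Longrightarrow> w \<notin> cfgs a P \<Longrightarrow> g w = 0"
  by (auto simp: gens_def rs_def)

lemma span_gens_supp: "g \<in> V.span (gens a n C P) \<Longrightarrow> w \<notin> cfgs a P \<Longrightarrow> g w = 0"
proof -
  assume g: "g \<in> V.span (gens a n C P)" and w: "w \<notin> cfgs a P"
  have "V.span (gens a n C P) \<subseteq> {f. \<forall>w. w \<notin> cfgs a P \<longrightarrow> f w = 0}"
    by (rule V.span_minimal[OF _ supp_subspace]) (auto simp: gens_supp)
  then show ?thesis using g w by auto
qed

lemma ctr_in_span:
  assumes "\<psi> \<in> C" "X \<subseteq> {..<n}"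
  shows "ctr a n X \<psi> f \<in> V.span (gens a n C ({..<n} - X))"
proof -
  have NX: "{..<n} - ({..<n} - X) = X" using assms by auto
  have "ctr a n X \<psi> f = (\<Sum>x\<in>cfgs a X. vscale (cnj (f x)) (rs a ({..<n} - X) (sl X x \<psi>)))"
    by (simp add: ctr_def fun_eq_iff sum_fun_apply)
  also have "\<dots> \<in> V.span (gens a n C ({..<n} - X))"
    apply (intro V.span_sum V.span_scale V.span_base)
    apply (simp add: gens_def NX)
    using assms(1) by blast
  finally show ?thesis .
qed

lemma ctr_ip:
  assumes M: "\<forall>\<psi>\<in>C. \<forall>\<phi>\<in>C. \<forall>t\<in>cfgs a X. \<forall>t'\<in>cfgs a X.
      ip a ({..<n} - X) (sl X t \<psi>) (sl X t' \<phi>) = M t t' * ip a {..<n} \<psi> \<phi>"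
    and psi: "\<psi> \<in> C" "\<phi> \<in> C" and X: "X \<subseteq> {..<n}"
  shows "ip a ({..<n} - X) (ctr a n X \<psi> f) (ctr a n X \<phi> g) = Bf a X M f g * ip a {..<n} \<psi> \<phi>"
proof -
  let ?Q = "{..<n} - X"
  have fX: "finite X" using X finite_subset by blast
  have "ip a ?Q (ctr a n X \<psi> f) (ctr a n X \<phi> g)
      = (\<Sum>z\<in>cfgs a ?Q. \<Sum>x\<in>cfgs a X. \<Sum>x'\<in>cfgs a X.
           (cnj (f x) * g x') * (rs a ?Q (sl X x \<psi>) z * cnj (rs a ?Q (sl X x' \<phi>) z)))"
    unfolding ip_def ctr_def cnj_sum sum_product by (intro sum.cong refl) (simp add: mult_ac)
  also have "\<dots> = (\<Sum>x\<in>cfgs a X. \<Sum>x'\<in>cfgs a X. \<Sum>z\<in>cfgs a ?Q.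
           (cnj (f x) * g x') * (rs a ?Q (sl X x \<psi>) z * cnj (rs a ?Q (sl X x' \<phi>) z)))"
    by (rule trans[OF sum.swap], rule sum.cong[OF refl], rule sum.swap)
  also have "\<dots> = (\<Sum>x\<in>cfgs a X. \<Sum>x'\<in>cfgs a X. (cnj (f x) * g x') * ip a ?Q (sl X x \<psi>) (sl X x' \<phi>))"
    by (intro sum.cong refl) (simp add: ip_def sum_distrib_left rs_def)
  also have "\<dots> = (\<Sum>x\<in>cfgs a X. \<Sum>x'\<in>cfgs a X. (cnj (f x) * g x') * (M x x' * ip a {..<n} \<psi> \<phi>))"
    using M psi by (intro sum.cong refl) simp
  also have "\<dots> = Bf a X M f g * ip a {..<n} \<psi> \<phi>"
    by (simp add: Bf_def sum_distrib_right sum_distrib_left mult_ac)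
  finally show ?thesis .
qed

lemma ctr_gen:
  assumes X: "X \<subseteq> {..<n}" and z: "z \<in> cfgs a ({..<n} - X)"
  shows "ctr a n X \<psi> f z = cnj (ip a X f (rs a X (sl ({..<n} - X) z \<psi>)))"
proof -
  have "ctr a n X \<psi> f z = (\<Sum>x\<in>cfgs a X. cnj (f x) * \<psi> (merge X x z))"
    using z by (simp add: ctr_def rs_def sl_def)
  also have "\<dots> = (\<Sum>x\<in>cfgs a X. cnj (f x) * \<psi> (merge ({..<n} - X) z x))"
    using z by (intro sum.cong refl) (simp add: merge_comm_cfgs)
  also have "\<dots> = cnj (ip a X f (rs a X (sl ({..<n} - X) z \<psi>)))"
    by (simp add: ip_def cnj_sum rs_def sl_def)
  finally show ?thesis .
qed

lemma definite:
  assumes M: "\<forall>\<psi>\<in>C. \<forall>\<phi>\<in>C. \<forall>t\<in>cfgs a X. \<forall>t'\<in>cfgs a X.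
      ip a ({..<n} - X) (sl X t \<psi>) (sl X t' \<phi>) = M t t' * ip a {..<n} \<psi> \<phi>"
    and X: "X \<subseteq> {..<n}" and f: "f \<in> V.span (gens a n C X)" and B0: "Bf a X M f f = 0"
  shows "f = 0"
proof -
  have fX: "finite X" using X finite_subset by blast
  have perp: "ip a X f g = 0" if g: "g \<in> gens a n C X" for g
  proof -
    obtain \<psi> q where pq: "\<psi> \<in> C" "q \<in> cfgs a ({..<n} - X)" "g = rs a X (sl ({..<n} - X) q \<psi>)"
      using g unfolding gens_def by blast
    have "ip a ({..<n} - X) (ctr a n X \<psi> f) (ctr a n X \<psi> f) = 0"
      using ctr_ip[OF M pq(1) pq(1) X] B0 by simp
    then have "ctr a n X \<psi> f q = 0" using ip_self_zero[of "{..<n} - X" a "ctr a n X \<psi> f" q] pq(2) by simp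
    then show ?thesis using ctr_gen[OF X pq(2)] pq(3) by simp
  qed
  have "ip a X f f = 0" by (rule perp_span[OF perp f])
  then have "f z = 0" if "z \<in> cfgs a X" for z using ip_self_zero[OF fX _ that] by simp
  moreover have "f z = 0" if "z \<notin> cfgs a X" for z using span_gens_supp[OF f that] .
  ultimately show ?thesis by (auto simp: fun_eq_iff)
qed


lemma basis_fin:
  assumes Cq: "C \<subseteq> qvecs a n"
  obtains Bc where "Bc \<subseteq> C" "V.independent Bc" "C \<subseteq> V.span Bc" "card Bc = V.dim C" "finite Bc"
proof -
  obtain Bc where Bc: "Bc \<subseteq> C" "V.independent Bc" "C \<subseteq> V.span Bc" "card Bc = V.dim C"
    using V.basis_exists by blast
  have s: "Bc \<subseteq> V.span C" using Bc(1) V.span_superset by blast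
  have "finite Bc"
    using indep_le_dim[of "{..<n}" Bc C a, OF _ Bc(2) s] Cq by (auto simp: qvecs_def)
  then show ?thesis using Bc that by blast
qed

lemma lower:
  assumes Cq: "C \<subseteq> qvecs a n" and sub: "V.subspace C" and X: "X \<subseteq> {..<n}" and KLX: "KL a n C X"
  shows "V.dim C * V.dim (gens a n C X) \<le> V.dim (gens a n C ({..<n} - X))"
proof -
  obtain M where M: "\<forall>\<psi>\<in>C. \<forall>\<phi>\<in>C. \<forall>t\<in>cfgs a X. \<forall>t'\<in>cfgs a X.
      ip a ({..<n} - X) (sl X t \<psi>) (sl X t' \<phi>) = M t t' * ip a {..<n} \<psi> \<phi>"
    using KLX unfolding KL_def by blast
  have fX: "finite X" using X finite_subset by blast
  obtain Bc where Bc: "Bc \<subseteq> C" "V.independent Bc" "C \<subseteq> V.span Bc" "card Bc = V.dim C" "finite Bc"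
    using basis_fin[OF Cq] by blast
  obtain Bs where Bs: "Bs \<subseteq> gens a n C X" "V.independent Bs" "gens a n C X \<subseteq> V.span Bs"
      "card Bs = V.dim (gens a n C X)"
    using V.basis_exists by blast
  have fBs: "finite Bs"
    using indep_le_dim[OF fX Bs(2), of "gens a n C X"] Bs(1) V.span_superset[of "gens a n C X"] gens_supp
    by blast
  define \<Phi> where "\<Phi> = (\<lambda>(\<psi>, f). ctr a n X \<psi> f)"
  let ?P = "Bc \<times> Bs"
  have key: "\<forall>p\<in>?P. u p = 0" if sum0: "(\<Sum>p\<in>?P. vscale (u p) (\<Phi> p)) = 0" for u
  proof -
    define g where "g \<psi> = (\<Sum>f\<in>Bs. vscale (cnj (u (\<psi>, f))) f)" for \<psi>
    have g_span: "g \<psi> \<in> V.span (gens a n C X)" for \<psi>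
      unfolding g_def using Bs(1) by (intro V.span_sum V.span_scale V.span_base) auto
    have ctr_g: "ctr a n X \<psi> (g \<psi>) z = (\<Sum>f\<in>Bs. u (\<psi>, f) * ctr a n X \<psi> f z)" for \<psi> z
    proof -
      have "ctr a n X \<psi> (g \<psi>) z = (\<Sum>x\<in>cfgs a X. \<Sum>f\<in>Bs. u (\<psi>, f) * (cnj (f x) * rs a ({..<n} - X) (sl X x \<psi>) z))"
        by (simp add: ctr_def g_def sum_fun_apply cnj_sum sum_distrib_left sum_distrib_right mult_ac)
      also have "\<dots> = (\<Sum>f\<in>Bs. u (\<psi>, f) * ctr a n X \<psi> f z)"
        by (subst sum.swap) (simp add: ctr_def sum_distrib_left)
      finally show ?thesis .
    qed
    have tot0: "(\<Sum>\<psi>\<in>Bc. ctr a n X \<psi> (g \<psi>)) = 0"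
    proof
      fix z
      have "(\<Sum>\<psi>\<in>Bc. ctr a n X \<psi> (g \<psi>)) z = (\<Sum>p\<in>?P. vscale (u p) (\<Phi> p)) z"
        by (simp add: sum_fun_apply ctr_g sum.cartesian_product \<Phi>_def split_def)
      then show "(\<Sum>\<psi>\<in>Bc. ctr a n X \<psi> (g \<psi>)) z = 0 z" using sum0 by simp
    qed
    show ?thesis
    proof
      fix p assume p: "p \<in> ?P"
      obtain \<psi>0 f0 where pp: "p = (\<psi>0, f0)" "\<psi>0 \<in> Bc" "f0 \<in> Bs" using p by auto
      let ?h = "g \<psi>0"
      define \<phi> where "\<phi> = (\<Sum>\<psi>\<in>Bc. vscale (Bf a X M (g \<psi>) ?h) \<psi>)"
      have phiC: "\<phi> \<in> C" unfolding \<phi>_def using Bc(1) sub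
        by (intro V.subspace_sum V.subspace_scale) auto
      have e: "ip a {..<n} \<phi> w = (\<Sum>\<psi>\<in>Bc. Bf a X M (g \<psi>) ?h * ip a {..<n} \<psi> w)" for w
        unfolding \<phi>_def by (simp add: ip_sum1[OF Bc(5)] ip_scale1)
      have "ip a {..<n} \<phi> \<phi> = (\<Sum>\<psi>\<in>Bc. Bf a X M (g \<psi>) ?h * ip a {..<n} \<psi> \<phi>)"
        by (rule e)
      also have "\<dots> = (\<Sum>\<psi>\<in>Bc. ip a ({..<n} - X) (ctr a n X \<psi> (g \<psi>)) (ctr a n X \<phi> ?h))"
        using ctr_ip[OF M _ phiC X] Bc(1) by (intro sum.cong refl) auto
      also have "\<dots> = ip a ({..<n} - X) (\<Sum>\<psi>\<in>Bc. ctr a n X \<psi> (g \<psi>)) (ctr a n X \<phi> ?h)"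
        by (simp add: ip_sum1[OF Bc(5)])
      also have "\<dots> = 0" unfolding tot0 by (simp add: ip_def)
      finally have "ip a {..<n} \<phi> \<phi> = 0" .
      then have "\<phi> y = 0" if "y \<in> cfgs a {..<n}" for y using ip_self_zero[OF _ _ that] by simp
      moreover have "\<phi> y = 0" if "y \<notin> cfgs a {..<n}" for y using phiC Cq that by (auto simp: qvecs_def)
      ultimately have "\<phi> = 0" by (auto simp: fun_eq_iff)
      then have "Bf a X M (g \<psi>0) ?h = 0"
        using V.independentD[OF Bc(2) Bc(5) subset_refl, of "\<lambda>\<psi>. Bf a X M (g \<psi>) ?h" \<psi>0] pp
        unfolding \<phi>_def by simp
      then have "?h = 0" using definite[OF M X g_span] by blast
      then have "cnj (u (\<psi>0, f0)) = 0"
        using V.independentD[OF Bs(2) fBs subset_refl, of "\<lambda>f. cnj (u (\<psi>0, f))" f0] pp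
        unfolding g_def by simp
      then show "u p = 0" using pp by simp
    qed
  qed
  have inj: "inj_on \<Phi> ?P"
  proof (rule inj_onI, rule ccontr)
    fix p q assume pq: "p \<in> ?P" "q \<in> ?P" "\<Phi> p = \<Phi> q" "p \<noteq> q"
    define u where "u r = (if r = p then 1 else if r = q then -1 else (0::complex))" for r
    have "(\<Sum>r\<in>?P. vscale (u r) (\<Phi> r)) = (\<Sum>r\<in>{p, q}. vscale (u r) (\<Phi> r))"
      using pq Bc(5) fBs by (intro sum.mono_neutral_right) (auto simp: u_def)
    also have "\<dots> = 0" using pq by (simp add: u_def fun_eq_iff vscale_def)
    finally have "u p = 0" using key pq(1) by blast
    then show False by (simp add: u_def)
  qed
  have indep: "V.independent (\<Phi> ` ?P)"
  proof (rule V.independent_if_scalars_zero)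
    show "finite (\<Phi> ` ?P)" using Bc(5) fBs by simp
    fix f x assume s: "(\<Sum>x\<in>\<Phi> ` ?P. vscale (f x) x) = 0" and x: "x \<in> \<Phi> ` ?P"
    have "(\<Sum>p\<in>?P. vscale (f (\<Phi> p)) (\<Phi> p)) = 0"
      using s by (simp add: sum.reindex[OF inj])
    then have "\<forall>p\<in>?P. f (\<Phi> p) = 0" by (rule key)
    then show "f x = 0" using x by auto
  qed
  have sp: "\<Phi> ` ?P \<subseteq> V.span (gens a n C ({..<n} - X))"
    using ctr_in_span[OF _ X] Bc(1) by (auto simp: \<Phi>_def)
  have "card (\<Phi> ` ?P) \<le> V.dim (gens a n C ({..<n} - X))"
    using indep_le_dim[of "{..<n} - X" "\<Phi> ` ?P" "gens a n C ({..<n} - X)" a] indep sp gens_supp by blast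
  moreover have "card (\<Phi> ` ?P) = V.dim C * V.dim (gens a n C X)"
    using card_image[OF inj] Bc(4) Bs(4) by (simp add: card_cartesian_product)
  ultimately show ?thesis by simp
qed


definition tens :: "nat \<Rightarrow> nat set \<Rightarrow> nat set \<Rightarrow> qvec \<Rightarrow> cfg \<Rightarrow> qvec" where
  "tens a P R f r = (\<lambda>z. if z \<in> cfgs a (P \<union> R) \<and> restr R z = r then f (restr P z) else 0)"

lemma upper:
  assumes PR: "P \<inter> R = {}" "P \<union> R \<subseteq> {..<n}"
  shows "V.dim (gens a n C (P \<union> R)) \<le> V.dim (gens a n C P) * a ^ card R"
proof -
  have fP: "finite P" and fR: "finite R" using PR finite_subset by auto
  obtain Bp where Bp: "Bp \<subseteq> gens a n C P" "V.independent Bp" "gens a n C P \<subseteq> V.span Bp"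
      "card Bp = V.dim (gens a n C P)"
    using V.basis_exists by blast
  have fBp: "finite Bp"
    using indep_le_dim[OF fP Bp(2), of "gens a n C P"] Bp(1) V.span_superset[of "gens a n C P"] gens_supp
    by blast
  define T where "T = (\<lambda>(f, r). tens a P R f r) ` (Bp \<times> cfgs a R)"
  have fT: "finite T" unfolding T_def using fBp fR by simp
  have cT: "card T \<le> V.dim (gens a n C P) * a ^ card R"
  proof -
    have "card T \<le> card (Bp \<times> cfgs a R)" unfolding T_def by (rule card_image_le) (use fBp fR in simp)
    also have "\<dots> = V.dim (gens a n C P) * a ^ card R"
      using Bp(4) finite_card_cfgs[OF fR, of a] by (simp add: card_cartesian_product)
    finally show ?thesis .
  qed
  have tens_span: "tens a P R f r \<in> V.span T" if f: "f \<in> gens a n C P" and r: "r \<in> cfgs a R" for f r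
  proof -
    have "V.subspace {f. tens a P R f r \<in> V.span T}"
    proof (rule V.subspaceI)
      show "0 \<in> {f. tens a P R f r \<in> V.span T}"
        by (simp add: tens_def V.span_zero[unfolded zero_fun_def] zero_fun_def)
      fix x y c
      assume x: "x \<in> {f. tens a P R f r \<in> V.span T}" and y: "y \<in> {f. tens a P R f r \<in> V.span T}"
      have "tens a P R (x + y) r = tens a P R x r + tens a P R y r" by (auto simp: tens_def fun_eq_iff)
      then show "x + y \<in> {f. tens a P R f r \<in> V.span T}" using x y V.span_add by auto
      have "tens a P R (vscale c x) r = vscale c (tens a P R x r)" by (auto simp: tens_def fun_eq_iff)
      then show "vscale c x \<in> {f. tens a P R f r \<in> V.span T}" using x V.span_scale by auto
    qed
    moreover have "Bp \<subseteq> {f. tens a P R f r \<in> V.span T}"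
      using r by (auto simp: T_def intro!: V.span_base)
    ultimately have "V.span Bp \<subseteq> {f. tens a P R f r \<in> V.span T}" by (rule V.span_minimal[rotated])
    then show ?thesis using f Bp(3) by auto
  qed
  have "gens a n C (P \<union> R) \<subseteq> V.span T"
  proof
    fix g assume "g \<in> gens a n C (P \<union> R)"
    then obtain \<psi> q where pq: "\<psi> \<in> C" "q \<in> cfgs a ({..<n} - (P \<union> R))" "g = rs a (P \<union> R) (sl ({..<n} - (P \<union> R)) q \<psi>)"
      unfolding gens_def by blast
    let ?Q = "{..<n} - (P \<union> R)"
    define F where "F r = rs a P (sl ({..<n} - P) (merge ?Q q r) \<psi>)" for r
    have FG: "F r \<in> gens a n C P" if "r \<in> cfgs a R" for r
    proof -
      have "merge ?Q q r \<in> cfgs a (?Q \<union> R)" by (rule merge_in_cfgs[OF pq(2) that])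
      moreover have "?Q \<union> R = {..<n} - P" using PR by auto
      ultimately show ?thesis unfolding gens_def F_def using pq(1) by auto
    qed
    have geq: "g = (\<Sum>r\<in>cfgs a R. tens a P R (F r) r)"
    proof
      fix z
      show "g z = (\<Sum>r\<in>cfgs a R. tens a P R (F r) r) z"
      proof (cases "z \<in> cfgs a (P \<union> R)")
        case False then show ?thesis by (simp add: pq(3) rs_def sum_fun_apply tens_def)
      next
        case True
        have rz: "restr R z \<in> cfgs a R" "restr P z \<in> cfgs a P"
          using True by (auto intro!: restr_in_cfgs)
        have e: "\<And>r. (if restr R z = r then F r (restr P z) else 0) = (if r = restr R z then F r (restr P z) else 0)"
          by auto
        have "(\<Sum>r\<in>cfgs a R. tens a P R (F r) r) z = F (restr R z) (restr P z)"
          using True rz fR by (simp add: sum_fun_apply tens_def e)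
        also have "\<dots> = \<psi> (merge ({..<n} - P) (merge ?Q q (restr R z)) (restr P z))"
          using rz by (simp add: F_def rs_def sl_def)
        also have "merge ({..<n} - P) (merge ?Q q (restr R z)) (restr P z) = merge ?Q q z"
          using True pq(2) PR by (auto simp: merge_def restr_def cfgs_def fun_eq_iff)
        finally show ?thesis using True by (simp add: pq(3) rs_def sl_def)
      qed
    qed
    show "g \<in> V.span T" unfolding geq
      by (intro V.span_sum tens_span FG) auto
  qed
  then have "V.dim (gens a n C (P \<union> R)) \<le> card T" by (rule V.dim_le_card[OF _ fT])
  then show ?thesis using cT by simp
qed


lemma decodable_empty:
  "decodable a n C {}"
proof -
  define Id :: qop where "Id = (\<lambda>y x. if x = y \<and> x \<in> cfgs a {..<n} then 1 else 0)"
  have k1: "\<forall>K\<in>set [Id]. \<forall>y x. K y x \<noteq> 0 \<longrightarrow> y \<in> cfgs a {..<n} \<and> x \<in> cfgs a {..<n}"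
    by (auto simp: Id_def)
  have k2: "\<forall>x\<in>cfgs a {..<n}. \<forall>x'\<in>cfgs a {..<n}.
        (\<Sum>K\<leftarrow>[Id]. \<Sum>y\<in>cfgs a {..<n}. cnj (K y x) * K y x') = (if x = x' then 1 else 0)"
  proof (intro ballI)
    fix x x' assume x: "x \<in> cfgs a {..<n}" "x' \<in> cfgs a {..<n}"
    have e: "\<And>y. cnj (Id y x) * Id y x' = (if y = x then (if x = x' then 1 else 0) else 0)"
      using x by (auto simp: Id_def)
    show "(\<Sum>K\<leftarrow>[Id]. \<Sum>y\<in>cfgs a {..<n}. cnj (K y x) * K y x') = (if x = x' then 1 else 0)"
      using x by (simp add: e sum.delta)
  qed
  have kr: "kraus a {..<n} {..<n} [Id]" unfolding kraus_def using k1 k2 by blast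
  have m: "merge {..<n} y (restr {} y') = y" if "y \<in> cfgs a {..<n}" for y y'
    using that by (auto simp: merge_def restr_def cfgs_def fun_eq_iff)
  have r: "restr {..<n} y = y" if "y \<in> cfgs a {..<n}" for y
    using that by (auto simp: restr_def cfgs_def fun_eq_iff)
  have "apply_ch a {..<n} {..<n} {} [Id] (reduced a n {..<n} \<psi>) = reduced a n {..<n} \<psi>" for \<psi>
  proof (intro ext)
    fix y y'
    show "apply_ch a {..<n} {..<n} {} [Id] (reduced a n {..<n} \<psi>) y y' = reduced a n {..<n} \<psi> y y'"
    proof (cases "y \<in> cfgs a {..<n} \<and> y' \<in> cfgs a {..<n}")
      case True
      have e1: "\<And>x. Id y x = (if x = y then 1 else 0)" using True by (auto simp: Id_def)
      have e2: "\<And>x. Id y' x = (if x = y' then 1 else 0)" using True by (auto simp: Id_def)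
      have "apply_ch a {..<n} {..<n} {} [Id] (reduced a n {..<n} \<psi>) y y'
          = (\<Sum>x\<in>cfgs a {..<n}. \<Sum>x'\<in>cfgs a {..<n}. (if x = y then 1 else 0) * reduced a n {..<n} \<psi> x x'
              * cnj (if x' = y' then 1 else 0))"
        using True by (simp add: apply_ch_def r m e1 e2 cong: sum.cong)
      also have "\<dots> = reduced a n {..<n} \<psi> y y'"
      proof -
        have d1: "\<And>P t. (if P then 1 else 0) * t = (if P then t else (0::complex))" by simp
        have d2: "\<And>P t. t * cnj (if P then 1 else 0) = (if P then t else (0::complex))" by simp
        show ?thesis using True by (simp add: d1 d2 sum.delta)
      qed
      finally show ?thesis .
    next
      case False
      then show ?thesis by (auto simp: apply_ch_def reduced_def)
    qed
  qed
  then show ?thesis unfolding decodable_def using kr by auto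
qed


lemma suc_div_le: "(r::nat) > 0 \<Longrightarrow> Suc w div r \<le> w div r + 1"
proof -
  assume r: "r > 0"
  have "Suc w div r \<le> (w + r) div r" using r by (intro div_le_mono) simp
  also have "\<dots> = w div r + 1" using r by simp
  finally show ?thesis .
qed

lemma mono_h: "(r::nat) > 0 \<Longrightarrow> w - w div r \<le> (w + j) - (w + j) div r"
proof (induction j)
  case 0 then show ?case by simp
next
  case (Suc j)
  have "Suc (w + j) div r \<le> (w + j) div r + 1" by (rule suc_div_le[OF Suc.prems])
  moreover have "(w + j) div r \<le> w + j" by simp
  ultimately show ?case using Suc by simp
qed

lemma mono_h': "(r::nat) > 0 \<Longrightarrow> w \<le> w' \<Longrightarrow> w - w div r \<le> w' - w' div r"
  using mono_h[of r w "w' - w"] by simp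

lemma arith_final:
  fixes n k d r x y :: nat
  assumes r: "r > 0" and d: "d \<ge> 1" and k: "k > 0" and kxy: "k + x + y \<le> n"
    and hx: "x \<ge> min n (d - 1) + (n - (d - 1)) div r"
    and hy: "y \<ge> min (n - x) (d - 1) + (n - x - (d - 1)) div r"
  shows "int k \<le> int n - 2 * (int d - 1)
          - \<lfloor>(real n - (real d - 1)) / real r\<rfloor>
          - \<lfloor>(real n - 2 * (real d - 1) - real_of_int \<lfloor>(real n - (real d - 1)) / real r\<rfloor>) / real r\<rfloor>"
proof -
  define D where "D = d - 1"
  have nD: "n \<ge> D"
  proof (rule ccontr)
    assume "\<not> n \<ge> D"
    then have "x \<ge> n" using hx by (simp add: D_def)
    then show False using kxy k by simp
  qed
  define f1 where "f1 = (n - D) div r"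
  have hx': "x \<ge> D + f1" using hx nD by (simp add: D_def f1_def)
  have nxD: "n - x \<ge> D"
  proof (rule ccontr)
    assume "\<not> n - x \<ge> D"
    then have "y \<ge> n - x" using hy by (simp add: D_def)
    then show False using kxy k by simp
  qed
  have hy': "y \<ge> D + (n - x - D) div r" using hy nxD by (simp add: D_def)
  define w0 where "w0 = n - 2 * D - f1"
  have w0ge: "n \<ge> 2 * D + f1" using nxD hx' kxy by linarith
  have ww: "n - x - D \<le> w0" using hx' unfolding w0_def by simp
  have "k \<le> n - x - y" using kxy by simp
  also have "\<dots> \<le> (n - x - D) - (n - x - D) div r" using hy' kxy by simp
  also have "\<dots> \<le> w0 - w0 div r" by (rule mono_h'[OF r ww])
  finally have kle: "k \<le> w0 - w0 div r" .
  have e1: "real n - (real d - 1) = real (n - D)" using d nD by (simp add: D_def of_nat_diff)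
  have f1e: "\<lfloor>(real n - (real d - 1)) / real r\<rfloor> = int f1"
    unfolding e1 f1_def by (rule floor_divide_of_nat_eq)
  have e2: "real n - 2 * (real d - 1) - real_of_int (int f1) = real w0"
    using d w0ge by (simp add: D_def w0_def of_nat_diff)
  have f2e: "\<lfloor>(real n - 2 * (real d - 1) - real_of_int (int f1)) / real r\<rfloor> = int (w0 div r)"
    unfolding e2 by (rule floor_divide_of_nat_eq)
  have i1: "int d - 1 = int D" using d by (simp add: D_def)
  have i2: "w0 div r \<le> w0" by simp
  have i3: "int w0 = int n - 2 * int D - int f1" using w0ge by (simp add: w0_def of_nat_diff)
  have i4: "int k \<le> int w0 - int (w0 div r)" using kle i2 by linarith
  show ?thesis unfolding f1e f2e i1 using i3 i4 by linarith
qed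


lemma gens_pos:
  assumes Cq: "C \<subseteq> qvecs a n" and X: "X \<subseteq> {..<n}" and psi: "\<psi> \<in> C" "\<psi> \<noteq> 0"
  shows "1 \<le> V.dim (gens a n C X)"
proof -
  obtain z where z: "\<psi> z \<noteq> 0" using psi(2) by (auto simp: fun_eq_iff)
  then have zc: "z \<in> cfgs a {..<n}" using psi(1) Cq by (auto simp: qvecs_def)
  have fX: "finite X" using X finite_subset by blast
  define g where "g = rs a X (sl ({..<n} - X) (restr ({..<n} - X) z) \<psi>)"
  have gG: "g \<in> gens a n C X" unfolding g_def gens_def using psi(1) zc
    by (auto intro!: restr_in_cfgs)
  have rX: "restr X z \<in> cfgs a X" using zc X by (auto intro!: restr_in_cfgs)
  have "merge ({..<n} - X) (restr ({..<n} - X) z) (restr X z) = z"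
    using zc X by (auto simp: merge_def restr_def cfgs_def fun_eq_iff)
  then have "g (restr X z) = \<psi> z" using rX by (simp add: g_def rs_def sl_def)
  then have g0: "g \<noteq> 0" using z by auto
  have "V.independent {g}" using g0 by simp
  moreover have "{g} \<subseteq> V.span (gens a n C X)" using gG V.span_base by blast
  ultimately have "card {g} \<le> V.dim (gens a n C X)"
    using indep_le_dim[OF fX, of "{g}" "gens a n C X"] gens_supp by blast
  then show ?thesis by simp
qed

lemma nat_sym_bound:
  fixes m A p q :: nat
  assumes "m * p \<le> q * A" "m * q \<le> p * A" "p > 0" "q > 0"
  shows "m \<le> A"
proof (rule ccontr)
  assume "\<not> m \<le> A"
  then have mA: "A < m" by simp
  have "q * A < q * m" using mA assms(4) by simp
  then have h1: "m * p < q * m" using le_less_trans[OF assms(1)] by blast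
  then have "m * p < m * q" by (simp add: mult.commute)
  then have pq: "p < q" by simp
  have "p * A < p * m" using mA assms(3) by simp
  then have h2: "m * q < p * m" using le_less_trans[OF assms(2)] by blast
  then have "m * q < m * p" by (simp add: mult.commute)
  then have "q < p" by simp
  then show False using pq by simp
qed

lemma singleton:
  assumes Cq: "C \<subseteq> qvecs a n" and sub: "V.subspace C"
    and X: "X \<subseteq> {..<n}" and Y: "Y \<subseteq> {..<n}" and XY: "X \<inter> Y = {}"
    and KX: "KL a n C X" and KY: "KL a n C Y" and m: "V.dim C > 0"
  shows "V.dim C \<le> a ^ (n - card X - card Y)"
proof -
  define R where "R = {..<n} - X - Y"
  obtain Bc where Bc: "Bc \<subseteq> C" "V.independent Bc" "C \<subseteq> V.span Bc" "card Bc = V.dim C" "finite Bc"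
    using basis_fin[OF Cq] by blast
  then obtain \<psi> where psi: "\<psi> \<in> Bc" using m by (metis card.empty ex_in_conv less_irrefl)
  have psi0: "\<psi> \<noteq> 0" using psi Bc(2) V.dependent_zero by blast
  have psiC: "\<psi> \<in> C" using psi Bc(1) by blast
  have pX: "V.dim (gens a n C X) > 0" using gens_pos[OF Cq X psiC psi0] by simp
  have pY: "V.dim (gens a n C Y) > 0" using gens_pos[OF Cq Y psiC psi0] by simp
  have e1: "{..<n} - X = Y \<union> R" using Y XY by (auto simp: R_def)
  have e2: "{..<n} - Y = X \<union> R" using X XY by (auto simp: R_def)
  have u1: "V.dim (gens a n C (Y \<union> R)) \<le> V.dim (gens a n C Y) * a ^ card R"
    by (rule upper) (auto simp: R_def Y)
  have u2: "V.dim (gens a n C (X \<union> R)) \<le> V.dim (gens a n C X) * a ^ card R"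
    by (rule upper) (auto simp: R_def X)
  have l1: "V.dim C * V.dim (gens a n C X) \<le> V.dim (gens a n C Y) * a ^ card R"
    using lower[OF Cq sub X KX] u1 e1 by simp
  have l2: "V.dim C * V.dim (gens a n C Y) \<le> V.dim (gens a n C X) * a ^ card R"
    using lower[OF Cq sub Y KY] u2 e2 by simp
  have "V.dim C \<le> a ^ card R" by (rule nat_sym_bound[OF l1 l2 pX pY])
  moreover have "card R = n - card X - card Y"
  proof -
    have fX: "finite X" and fY: "finite Y" using X Y finite_subset by auto
    have "R = {..<n} - (X \<union> Y)" by (auto simp: R_def)
    then have "card R = n - card (X \<union> Y)" using X Y by (simp add: card_Diff_subset fX fY)
    then show ?thesis using card_Un_disjoint[OF fX fY XY] by simp
  qed
  ultimately show ?thesis by simp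
qed

theorem theorem3p1:
  fixes a n k d r :: nat and C :: "qvec set"
  assumes "a \<ge> 2"
    and "quantum_code a n k C"
    and "k > 0"
    and "code_distance a n C d"
    and "qLRC_locality a n C r"
  shows "int k \<le> int n - 2 * (int d - 1)
          - \<lfloor>(real n - (real d - 1)) / real r\<rfloor>
          - \<lfloor>(real n - 2 * (real d - 1) - real_of_int \<lfloor>(real n - (real d - 1)) / real r\<rfloor>) / real r\<rfloor>"
proof -
  note a2 = assms(1) and k = assms(3) and loc = assms(5)
  have Cq: "C \<subseteq> qvecs a n" and sub: "V.subspace C" and dimC: "V.dim C = a ^ k"
    using assms(2) unfolding quantum_code_def by auto
  have dec: "decodes_below a n C d" and ndec: "\<not> decodes_below a n C (Suc d)"
    using assms(4) unfolding code_distance_def by auto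
  have mpos: "V.dim C > 0" using dimC a2 by simp
  have kle: "k \<le> n - card X - card Y" if "X \<subseteq> {..<n}" "Y \<subseteq> {..<n}" "X \<inter> Y = {}" "KL a n C X" "KL a n C Y" for X Y
  proof -
    have "a ^ k \<le> a ^ (n - card X - card Y)" using singleton[OF Cq sub that mpos] dimC by simp
    then show ?thesis using a2 by (simp add: power_le_imp_le_exp)
  qed
  have npos: "n > 0"
  proof (rule ccontr)
    assume "\<not> n > 0"
    then have "k \<le> 0" using kle[of "{}" "{}"] KL_empty by simp
    then show False using k by simp
  qed
  obtain I where "0 \<in> I" "I \<subseteq> {..<n}" "card I \<le> r"
    using loc npos unfolding qLRC_locality_def by blast
  then have r: "r > 0" using finite_subset[of I "{..<n}"] by (metis card_gt_0_iff empty_iff finite_lessThan le_trans less_le_trans not_le)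
  have d1: "d \<ge> 1"
  proof (rule ccontr)
    assume "\<not> d \<ge> 1"
    then have "d = 0" by simp
    have "decodes_below a n C (Suc d)"
      unfolding decodes_below_def
    proof (intro allI impI)
      fix S assume S: "S \<subseteq> {..<n} \<and> card S < Suc d"
      then have "S = {}" using \<open>d = 0\<close> finite_subset[of S "{..<n}"] by auto
      then show "decodable a n C S" using decodable_empty by simp
    qed
    then show False using ndec by simp
  qed
  obtain X where X: "X \<subseteq> {..<n}" "KL a n C X" "card X \<ge> min n (d - 1) + (n - (d - 1)) div r"
    using build[OF Cq sub loc dec r, of "{..<n}"] by auto
  have fX: "finite X" using X(1) finite_subset by blast
  have cNX: "card ({..<n} - X) = n - card X" using X(1) fX by (simp add: card_Diff_subset)
  obtain Y where Y: "Y \<subseteq> {..<n} - X" "KL a n C Y"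
      "card Y \<ge> min (n - card X) (d - 1) + (n - card X - (d - 1)) div r"
    using build[OF Cq sub loc dec r, of "{..<n} - X"] cNX by auto
  have "k \<le> n - card X - card Y" using kle[OF X(1) _ _ X(2) Y(2)] Y(1) by auto
  then have "k + card X + card Y \<le> n" using k by linarith
  then show ?thesis using arith_final[OF r d1 k _ X(3) Y(3)] by simp
qed


end
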